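(* Let $\mathcal{G}$ be a finite tree, let $i,j$ be nodes, and let $(v_0=i,v_1,\dots,v_N=j)$ be the unique path from $i$ to $j$, $N\ge1$. For $0\le n\le N-1$ let $\mathcal{G}_n$ be the connected component containing $v_n$ of the graph obtained from $\mathcal{G}$ by deleting the edge $(v_n,v_{n+1})$, with edge set $\mathcal{E}(\mathcal{G}_n)$, and let $d_{v_n}$ denote the degree of $v_n$ in $\mathcal{G}$. Then the access time of the begrudgingly backtracking random walk from $i$ to $j$ is $$\tilde{\mathtt{t}}(i,j)=\sum_{n=0}^{N-1}\Bigl(1+2|\mathcal{E}(\mathcal{G}_n)|\cdot\frac{d_{v_n}-1}{d_{v_n}}\Bigr)-\sum_{n=1}^{N-1}\frac{2|\mathcal{E}(\mathcal{G}_{n-1})|}{d_{v_n}}-\sum_{n=1}^{N-1}\frac{2}{d_{v_n}}.$$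
   Context: Begrudgingly backtracking random walk (BBRW) on $\mathcal{G}$: $x_1$ is uniform on the neighbors of $x_0$; for $n\ge0$, given $x_n=u,x_{n+1}=v$, $x_{n+2}$ is uniform on $\mathcal{N}(v)\setminus\{u\}$ if this set is nonempty, and $x_{n+2}=u$ otherwise. For a node $k$, $T_k=\min\{n\ge0:x_n=k\}$ and the access time is $\tilde{\mathtt{t}}(i,k)=\mathbb{E}[T_k\mid x_0=i]$. *)

theory Defs
  imports Complex_Main
begin

definition simple_graph :: "'a set \<Rightarrow> ('a \<Rightarrow> 'a \<Rightarrow> bool) \<Rightarrow> bool" where
  "simple_graph V E \<longleftrightarrow> finite V \<and>
     (\<forall>a b. E a b \<longrightarrow> a \<in> V \<and> b \<in> V \<and> a \<noteq> b \<and> E b a)"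

definition is_path :: "('a \<Rightarrow> 'a \<Rightarrow> bool) \<Rightarrow> 'a list \<Rightarrow> bool" where
  "is_path E vs \<longleftrightarrow> vs \<noteq> [] \<and> distinct vs \<and>
     (\<forall>m. m + 1 < length vs \<longrightarrow> E (vs ! m) (vs ! (m + 1)))"

definition graph_connected :: "'a set \<Rightarrow> ('a \<Rightarrow> 'a \<Rightarrow> bool) \<Rightarrow> bool" where
  "graph_connected V E \<longleftrightarrow> (\<forall>a\<in>V. \<forall>b\<in>V. E\<^sup>*\<^sup>* a b)"

definition acyclic_graph :: "('a \<Rightarrow> 'a \<Rightarrow> bool) \<Rightarrow> bool" where
  "acyclic_graph E \<longleftrightarrow> \<not> (\<exists>cs. 3 \<le> length cs \<and> is_path E cs \<and> E (last cs) (hd cs))"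

definition is_tree :: "'a set \<Rightarrow> ('a \<Rightarrow> 'a \<Rightarrow> bool) \<Rightarrow> bool" where
  "is_tree V E \<longleftrightarrow> simple_graph V E \<and> V \<noteq> {} \<and> graph_connected V E \<and> acyclic_graph E"

definition nbrs :: "'a set \<Rightarrow> ('a \<Rightarrow> 'a \<Rightarrow> bool) \<Rightarrow> 'a \<Rightarrow> 'a set" where
  "nbrs V E v = {u \<in> V. E v u}"

definition deg :: "'a set \<Rightarrow> ('a \<Rightarrow> 'a \<Rightarrow> bool) \<Rightarrow> 'a \<Rightarrow> nat" where
  "deg V E v = card (nbrs V E v)"

text \<open>Edge set (as unordered pairs) of the connected component containing a of the graph
  obtained by deleting the edge {a,b}.\<close>
definition comp_edges :: "('a \<Rightarrow> 'a \<Rightarrow> bool) \<Rightarrow> 'a \<Rightarrow> 'a \<Rightarrow> 'a set set" where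
  "comp_edges E a b =
     (let E' = (\<lambda>p q. E p q \<and> {p, q} \<noteq> {a, b})
      in {{x, y} | x y. E' x y \<and> E'\<^sup>*\<^sup>* a x})"

definition bbrw_step :: "'a set \<Rightarrow> ('a \<Rightarrow> 'a \<Rightarrow> bool) \<Rightarrow> 'a \<Rightarrow> 'a \<Rightarrow> 'a \<Rightarrow> real" where
  "bbrw_step V E u v w =
     (let S = nbrs V E v - {u} in
      if S \<noteq> {} then (if w \<in> S then 1 / real (card S) else 0)
      else (if w = u then 1 else 0))"

text \<open>Probability that (x_0, ..., x_n) = xs when x_0 = i (x_1 uniform on neighbours of x_0).\<close>
definition bbrw_walk_prob :: "'a set \<Rightarrow> ('a \<Rightarrow> 'a \<Rightarrow> bool) \<Rightarrow> 'a \<Rightarrow> 'a list \<Rightarrow> real" where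
  "bbrw_walk_prob V E i xs =
     (if xs = [] then 0 else
       (if hd xs = i then 1 else 0) *
       (if 2 \<le> length xs then
          (if xs ! 1 \<in> nbrs V E (xs ! 0) then 1 / real (deg V E (xs ! 0)) else 0)
        else 1) *
       (\<Prod>m<length xs - 2. bbrw_step V E (xs ! m) (xs ! (m + 1)) (xs ! (m + 2))))"

text \<open>P(T_k > n | x_0 = i): probability that x_0, ..., x_n all differ from k.\<close>
definition bbrw_tail :: "'a set \<Rightarrow> ('a \<Rightarrow> 'a \<Rightarrow> bool) \<Rightarrow> 'a \<Rightarrow> 'a \<Rightarrow> nat \<Rightarrow> real" where
  "bbrw_tail V E i k n =
     (\<Sum>xs \<in> {xs. set xs \<subseteq> V \<and> length xs = Suc n \<and> k \<notin> set xs}. bbrw_walk_prob V E i xs)"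

text \<open>Access time E[T_k | x_0 = i] = sum over n of P(T_k > n); the theorem asserts that
  this series converges to the stated value (in particular the access time is finite).\<close>

end

theory Submission
  imports Defs
begin

lemma is_path_mono: "is_path R p \<Longrightarrow> (\<And>a b. R a b \<Longrightarrow> S a b) \<Longrightarrow> is_path S p"
  unfolding is_path_def by blast

lemma rtranclp_path:
  assumes "R\<^sup>*\<^sup>* a b" shows "\<exists>p. is_path R p \<and> hd p = a \<and> last p = b"
  using assms
proof (induction rule: rtranclp_induct)
  case base then show ?case by (intro exI[of _ "[a]"]) (simp add: is_path_def)
next
  case (step b c)
  then obtain p where p: "is_path R p" "hd p = a" "last p = b" by blast
  show ?case
  proof (cases "c \<in> set p")
    case True
    then obtain k where k: "k < length p" "p ! k = c" by (auto simp: in_set_conv_nth)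
    let ?q = "take (Suc k) p"
    have "is_path R ?q" using p(1) k unfolding is_path_def by auto
    moreover have "hd ?q = a" using p k unfolding is_path_def by (simp add: hd_take)
    moreover have "last ?q = c" using k by (subst last_conv_nth) (auto simp: min_def intro: arg_cong[where f="nth p"])
    ultimately show ?thesis by blast
  next
    case False
    let ?q = "p @ [c]"
    have "is_path R ?q" unfolding is_path_def
    proof (intro conjI allI impI)
      show "?q \<noteq> []" by simp
      show "distinct ?q" using p(1) False by (simp add: is_path_def)
    next
      fix m assume m: "m + 1 < length ?q"
      show "R (?q ! m) (?q ! (m + 1))"
      proof (cases "m + 1 < length p")
        case True then show ?thesis using p(1) by (simp add: is_path_def nth_append)
      next
        case False
        then have "m + 1 = length p" using m by simp
        then have mm: "m = length p - 1" by simp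
        have "p \<noteq> []" using p(1) by (simp add: is_path_def)
        then have "?q ! m = last p" "?q ! (m+1) = c" using \<open>m + 1 = length p\<close> mm
          by (auto simp: nth_append last_conv_nth)
        then show ?thesis using p(3) step(2) by simp
      qed
    qed
    moreover have "hd ?q = a" using p unfolding is_path_def by simp
    ultimately show ?thesis by auto
  qed
qed

lemma rtranclp_sym:
  assumes "\<And>a b. R a b \<Longrightarrow> R b a" "R\<^sup>*\<^sup>* x y" shows "R\<^sup>*\<^sup>* y x"
  using assms(2)
proof (induction rule: rtranclp_induct)
  case base then show ?case by simp
next
  case (step y z) then show ?case
    by (meson assms(1) converse_rtranclp_into_rtranclp)
qed


locale bb =
  fixes V :: "'a set" and E :: "'a \<Rightarrow> 'a \<Rightarrow> bool" and j :: 'a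
  assumes tree: "is_tree V E" and jV: "j \<in> V"
begin

lemma finV: "finite V" using tree by (simp add: is_tree_def simple_graph_def)
lemma Esym: "E a b \<Longrightarrow> E b a" using tree by (simp add: is_tree_def simple_graph_def)
lemma EV1: "E a b \<Longrightarrow> a \<in> V" using tree by (simp add: is_tree_def simple_graph_def)
lemma EV2: "E a b \<Longrightarrow> b \<in> V" using tree by (simp add: is_tree_def simple_graph_def)
lemma Eirr: "E a b \<Longrightarrow> a \<noteq> b" using tree by (simp add: is_tree_def simple_graph_def)
lemma conn: "a \<in> V \<Longrightarrow> b \<in> V \<Longrightarrow> E\<^sup>*\<^sup>* a b"
  using tree by (simp add: is_tree_def graph_connected_def)
lemma acyc: "\<not> (3 \<le> length cs \<and> is_path E cs \<and> E (last cs) (hd cs))"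
  using tree by (auto simp: is_tree_def acyclic_graph_def)

definition Ed :: "'a \<Rightarrow> 'a \<Rightarrow> 'a \<Rightarrow> 'a \<Rightarrow> bool" where
  "Ed u v = (\<lambda>p q. E p q \<and> {p, q} \<noteq> {u, v})"

definition side :: "'a \<Rightarrow> 'a \<Rightarrow> 'a set" where
  "side u v = {x. (Ed u v)\<^sup>*\<^sup>* v x}"

lemma Ed_comm: "Ed u v = Ed v u" unfolding Ed_def by (auto simp: insert_commute)
lemma Ed_sym: "Ed u v a b \<Longrightarrow> Ed u v b a" unfolding Ed_def using Esym by (auto simp: insert_commute)
lemma Ed_rt_sym: "(Ed u v)\<^sup>*\<^sup>* a b \<Longrightarrow> (Ed u v)\<^sup>*\<^sup>* b a"
  using rtranclp_sym[of "Ed u v" a b] Ed_sym by blast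

lemma key: assumes "E u v" shows "u \<notin> side u v"
proof
  assume "u \<in> side u v"
  then have "(Ed u v)\<^sup>*\<^sup>* v u" by (simp add: side_def)
  then obtain p where p: "is_path (Ed u v) p" "hd p = v" "last p = u" using rtranclp_path[of "Ed u v" v u] by blast
  have uv: "u \<noteq> v" using Eirr assms by blast
  have ne: "p \<noteq> []" using p by (simp add: is_path_def)
  have l2: "length p \<ge> 2"
  proof (rule ccontr)
    assume "\<not> length p \<ge> 2"
    then have "length p = 1" using ne by (cases p) (auto simp: Suc_le_eq)
    then have "hd p = last p" using ne by (simp add: hd_conv_nth last_conv_nth)
    then show False using p uv by simp
  qed
  have l3: "length p \<ge> 3"
  proof (rule ccontr)
    assume "\<not> length p \<ge> 3"
    then have l: "length p = 2" using l2 by simp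
    have "Ed u v (p ! 0) (p ! (0 + 1))" using p(1) l unfolding is_path_def by simp
    moreover have "p ! 0 = v" using p(2) ne by (simp add: hd_conv_nth)
    moreover have "p ! 1 = u" using p(3) ne l by (simp add: last_conv_nth)
    ultimately show False by (simp add: Ed_def insert_commute)
  qed
  have "is_path E p" using p(1) by (rule is_path_mono) (simp add: Ed_def)
  then show False using acyc[of p] l3 p assms by simp
qed

lemma v_in: "E u v \<Longrightarrow> v \<in> side u v" by (simp add: side_def)

lemma closure: assumes "x \<in> side u v" "E x y" "{x, y} \<noteq> {u, v}" shows "y \<in> side u v"
  using assms unfolding side_def Ed_def by (auto intro: rtranclp.rtrancl_into_rtrancl)

lemma side_V: assumes "E u v" shows "side u v \<subseteq> V"
proof
  fix x assume "x \<in> side u v"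
  then have "(Ed u v)\<^sup>*\<^sup>* v x" by (simp add: side_def)
  then show "x \<in> V"
  proof (induction rule: rtranclp_induct)
    case base show ?case using assms EV2 by blast
  next
    case (step a b) then have "E a b" by (simp add: Ed_def)
    then show ?case using EV2 by blast
  qed
qed

lemma cover: assumes "E u v" "x \<in> V" shows "x \<in> side u v \<or> x \<in> side v u"
proof -
  have uV: "u \<in> V" using EV1 assms by blast
  have "E\<^sup>*\<^sup>* u x" using conn uV assms(2) by blast
  then show ?thesis
  proof (induction rule: rtranclp_induct)
    case base then show ?case using v_in Esym assms(1) by blast
  next
    case (step a b)
    show ?case
    proof (cases "{a, b} = {u, v}")
      case True
      then have "b = u \<or> b = v" by (auto simp: doubleton_eq_iff)
      then show ?thesis using v_in Esym assms(1) by blast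
    next
      case False
      then have "{a, b} \<noteq> {v, u}" by (auto simp: insert_commute)
      from step(3) show ?thesis
      proof
        assume "a \<in> side u v" then show ?thesis using closure[OF _ step(2) False] by blast
      next
        assume "a \<in> side v u" then show ?thesis using closure[OF _ step(2) \<open>{a, b} \<noteq> {v, u}\<close>] by blast
      qed
    qed
  qed
qed

lemma disj: assumes "E u v" shows "side u v \<inter> side v u = {}"
proof (rule ccontr)
  assume "side u v \<inter> side v u \<noteq> {}"
  then obtain x where "(Ed u v)\<^sup>*\<^sup>* v x" "(Ed v u)\<^sup>*\<^sup>* u x" by (auto simp: side_def)
  then have "(Ed u v)\<^sup>*\<^sup>* v x" "(Ed u v)\<^sup>*\<^sup>* x u" using Ed_comm Ed_rt_sym by metis+
  then have "(Ed u v)\<^sup>*\<^sup>* v u" by auto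
  then show False using key[OF assms] by (simp add: side_def)
qed

lemma sub_side: assumes "E u v" "E v w" "w \<noteq> u" shows "side v w \<subseteq> side u v"
proof
  fix y assume "y \<in> side v w"
  then have "(Ed v w)\<^sup>*\<^sup>* w y" by (simp add: side_def)
  then show "y \<in> side u v"
  proof (induction rule: rtranclp_induct)
    case base
    have "{v, w} \<noteq> {u, v}" using assms Eirr by (auto simp: doubleton_eq_iff)
    then show ?case using closure v_in assms by blast
  next
    case (step a b)
    have "a \<in> side v w" "b \<in> side v w" using step by (auto simp: side_def)
    then have "a \<noteq> v" "b \<noteq> v" using key[OF assms(2)] by auto
    then have "{a, b} \<noteq> {u, v}" by auto
    moreover have "E a b" using step(2) by (simp add: Ed_def)
    ultimately show ?case using closure[OF step(3)] by blast
  qed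
qed

lemma decomp: assumes "E u v"
  shows "side u v = insert v (\<Union>w\<in>nbrs V E v - {u}. side v w)"
proof
  show "insert v (\<Union>w\<in>nbrs V E v - {u}. side v w) \<subseteq> side u v"
  proof (intro insert_subsetI UN_least)
    show "v \<in> side u v" using v_in assms .
    fix w assume "w \<in> nbrs V E v - {u}"
    then have "E v w" "w \<noteq> u" by (auto simp: nbrs_def)
    then show "side v w \<subseteq> side u v" using sub_side assms by blast
  qed
next
  show "side u v \<subseteq> insert v (\<Union>w\<in>nbrs V E v - {u}. side v w)"
  proof
    fix x assume "x \<in> side u v"
    then have "(Ed u v)\<^sup>*\<^sup>* v x" by (simp add: side_def)
    then show "x \<in> insert v (\<Union>w\<in>nbrs V E v - {u}. side v w)"
    proof (induction rule: rtranclp_induct)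
      case base then show ?case by simp
    next
      case (step a b)
      have Eab: "E a b" "{a, b} \<noteq> {u, v}" using step(2) by (auto simp: Ed_def)
      show ?case
      proof (cases "a = v")
        case True
        then have "b \<noteq> u" using Eab by auto
        moreover have "b \<in> nbrs V E v" using Eab True EV2 by (auto simp: nbrs_def)
        moreover have "b \<in> side v b" using v_in[of v b] Eab True by simp
        ultimately show ?thesis by blast
      next
        case False
        then have "a \<in> (\<Union>w\<in>nbrs V E v - {u}. side v w)" using step(3) by simp
        then obtain w where w: "w \<in> nbrs V E v - {u}" "a \<in> side v w" by blast
        have Evw: "E v w" using w by (simp add: nbrs_def)
        show ?thesis
        proof (cases "{a, b} = {v, w}")
          case True
          then have "b = v" using False by (auto simp: doubleton_eq_iff)
          then show ?thesis by simp
        next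
          case False
          then have "b \<in> side v w" using closure[OF w(2) Eab(1)] by blast
          then show ?thesis using w(1) by blast
        qed
      qed
    qed
  qed
qed

lemma sib_disj: assumes "E v w" "E v w'" "w \<noteq> w'" shows "side v w \<inter> side v w' = {}"
proof -
  have "side v w' \<subseteq> side w v" using sub_side[of w v w'] assms Esym by simp
  then show ?thesis using disj[OF assms(1)] by blast
qed

end

context bb begin

definition nxt :: "'a \<Rightarrow> 'a" where "nxt v = (THE w. E v w \<and> j \<in> side v w)"

definition CE :: "'a \<Rightarrow> 'a \<Rightarrow> 'a set set" where
  "CE u v = {{x, y} | x y. Ed u v x y \<and> x \<in> side u v}"

lemma CE_comp: "comp_edges E v u = CE u v"
proof -
  have e: "(\<lambda>p q. E p q \<and> {p, q} \<noteq> {v, u}) = Ed u v"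
    by (auto simp: Ed_def insert_commute fun_eq_iff)
  show ?thesis unfolding comp_edges_def Let_def e CE_def side_def by simp
qed

lemma nxt_ex: assumes "v \<in> V" "v \<noteq> j" shows "\<exists>w. E v w \<and> j \<in> side v w"
proof -
  have "E\<^sup>*\<^sup>* v j" using conn assms jV by blast
  then obtain w0 where w0: "E v w0" using assms(2) by (cases rule: converse_rtranclpE) auto
  have "j \<in> side v w0 \<or> j \<in> side w0 v" using cover[OF w0 jV] .
  then show ?thesis
  proof
    assume "j \<in> side v w0" then show ?thesis using w0 by blast
  next
    assume "j \<in> side w0 v"
    then have "j \<in> insert v (\<Union>w\<in>nbrs V E v - {w0}. side v w)" using decomp[of w0 v] w0 Esym by simp
    then have "j \<in> (\<Union>w\<in>nbrs V E v - {w0}. side v w)" using assms(2) by simp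
    then obtain w where "w \<in> nbrs V E v" "j \<in> side v w" by blast
    then show ?thesis by (auto simp: nbrs_def)
  qed
qed

lemma nxt_uniq: assumes "E v w" "j \<in> side v w" "E v w'" "j \<in> side v w'" shows "w = w'"
  using sib_disj[OF assms(1) assms(3)] assms by blast

lemma nxt: assumes "v \<in> V" "v \<noteq> j" shows "E v (nxt v)" "j \<in> side v (nxt v)"
proof -
  have "\<exists>!w. E v w \<and> j \<in> side v w" using nxt_ex[OF assms] nxt_uniq by blast
  then have "E v (nxt v) \<and> j \<in> side v (nxt v)" unfolding nxt_def by (rule theI')
  then show "E v (nxt v)" "j \<in> side v (nxt v)" by auto
qed

lemma nxt_eq: assumes "E v w" "j \<in> side v w" shows "nxt v = w"
proof -
  have "v \<noteq> j" using key[OF assms(1)] assms(2) by auto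
  moreover have "v \<in> V" using EV1 assms(1) by blast
  ultimately show ?thesis using nxt nxt_uniq assms by metis
qed

lemma CE_fin: "finite (CE u v)"
proof (rule finite_subset)
  show "CE u v \<subseteq> Pow V" unfolding CE_def Ed_def using EV1 EV2 by blast
  show "finite (Pow V)" using finV by simp
qed

lemma CE_decomp: assumes "E u v"
  shows "CE u v = (\<Union>w\<in>nbrs V E v - {u}. insert {v, w} (CE v w))"
proof
  show "CE u v \<subseteq> (\<Union>w\<in>nbrs V E v - {u}. insert {v, w} (CE v w))"
  proof
    fix e assume "e \<in> CE u v"
    then obtain x y where e: "e = {x, y}" "E x y" "{x, y} \<noteq> {u, v}" "x \<in> side u v"
      unfolding CE_def Ed_def by blast
    have "x \<in> insert v (\<Union>w\<in>nbrs V E v - {u}. side v w)" using decomp[OF assms] e(4) by simp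
    then show "e \<in> (\<Union>w\<in>nbrs V E v - {u}. insert {v, w} (CE v w))"
    proof
      assume "x = v"
      then have "y \<in> nbrs V E v - {u}" using e EV2 by (auto simp: nbrs_def)
      then show ?thesis using e \<open>x = v\<close> by blast
    next
      assume "x \<in> (\<Union>w\<in>nbrs V E v - {u}. side v w)"
      then obtain w where w: "w \<in> nbrs V E v - {u}" "x \<in> side v w" by blast
      show ?thesis
      proof (cases "{x, y} = {v, w}")
        case True then show ?thesis using w e by blast
      next
        case False
        then have "e \<in> CE v w" using e w unfolding CE_def Ed_def by blast
        then show ?thesis using w by blast
      qed
    qed
  qed
next
  show "(\<Union>w\<in>nbrs V E v - {u}. insert {v, w} (CE v w)) \<subseteq> CE u v"
  proof (intro UN_least insert_subsetI)
    fix w assume w: "w \<in> nbrs V E v - {u}"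
    then have Evw: "E v w" "w \<noteq> u" by (auto simp: nbrs_def)
    have uv: "u \<noteq> v" "v \<noteq> w" using Eirr assms Evw by auto
    have "{v, w} \<noteq> {u, v}" using uv Evw by (auto simp: doubleton_eq_iff)
    then show "{v, w} \<in> CE u v" unfolding CE_def Ed_def using Evw v_in[OF assms] by blast
    show "CE v w \<subseteq> CE u v"
    proof
      fix e assume "e \<in> CE v w"
      then obtain x y where e: "e = {x, y}" "E x y" "{x, y} \<noteq> {v, w}" "x \<in> side v w"
        unfolding CE_def Ed_def by blast
      have sub: "side v w \<subseteq> side u v" using sub_side[OF assms Evw] .
      have "x \<noteq> v" using key[OF Evw(1)] e(4) by auto
      moreover have "x \<noteq> u" using key[OF assms] e(4) sub by auto
      ultimately have "{x, y} \<noteq> {u, v}" by (auto simp: doubleton_eq_iff)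
      then show "e \<in> CE u v" unfolding CE_def Ed_def using e sub by blast
    qed
  qed
qed

lemma CE_card: assumes "E u v"
  shows "card (CE u v) = (\<Sum>w\<in>nbrs V E v - {u}. card (CE v w) + 1)"
proof -
  have fin: "finite (nbrs V E v - {u})" using finV by (simp add: nbrs_def)
  have notin: "{v, w} \<notin> CE v w" for w unfolding CE_def Ed_def by blast
  have dj: "insert {v, w} (CE v w) \<inter> insert {v, w'} (CE v w') = {}"
    if w: "w \<in> nbrs V E v - {u}" "w' \<in> nbrs V E v - {u}" "w \<noteq> w'" for w w'
  proof -
    have E: "E v w" "E v w'" using w by (auto simp: nbrs_def)
    have sd: "side v w \<inter> side v w' = {}" using sib_disj[OF E w(3)] .
    have wv: "w \<noteq> v" "w' \<noteq> v" using Eirr E by auto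
    have kv: "v \<notin> side v w" "v \<notin> side v w'" using key E by auto
    have wi: "w \<in> side v w" "w' \<in> side v w'" using v_in E by auto
    have a: "{v, w} \<noteq> {v, w'}" using w(3) wv by (auto simp: doubleton_eq_iff)
    have b: "{v, w} \<notin> CE v w'"
    proof
      assume "{v, w} \<in> CE v w'"
      then obtain x y where "{v, w} = {x, y}" "x \<in> side v w'" unfolding CE_def by blast
      then have "x = w" using kv by (auto simp: doubleton_eq_iff)
      then show False using \<open>x \<in> side v w'\<close> wi sd by blast
    qed
    have c: "{v, w'} \<notin> CE v w"
    proof
      assume "{v, w'} \<in> CE v w"
      then obtain x y where "{v, w'} = {x, y}" "x \<in> side v w" unfolding CE_def by blast
      then have "x = w'" using kv by (auto simp: doubleton_eq_iff)
      then show False using \<open>x \<in> side v w\<close> wi sd by blast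
    qed
    have d: "CE v w \<inter> CE v w' = {}"
    proof (rule ccontr)
      assume "CE v w \<inter> CE v w' \<noteq> {}"
      then obtain x y x' y' where xy: "{x, y} = {x', y'}" "E x y" "{x, y} \<noteq> {v, w}" "x \<in> side v w"
        "x' \<in> side v w'" unfolding CE_def Ed_def by blast
      show False
      proof (cases "x = x'")
        case True then show False using xy sd by blast
      next
        case False
        then have "y = x'" using xy(1) by (auto simp: doubleton_eq_iff)
        have "y \<in> side v w" using closure[OF xy(4) xy(2) xy(3)] .
        then show False using \<open>y = x'\<close> xy(5) sd by blast
      qed
    qed
    show ?thesis using a b c d by blast
  qed
  have "card (CE u v) = card (\<Union>w\<in>nbrs V E v - {u}. insert {v, w} (CE v w))"
    using CE_decomp[OF assms] by simp
  also have "\<dots> = (\<Sum>w\<in>nbrs V E v - {u}. card (insert {v, w} (CE v w)))"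
    by (rule card_UN_disjoint[OF fin]) (use CE_fin dj in auto)
  also have "\<dots> = (\<Sum>w\<in>nbrs V E v - {u}. card (CE v w) + 1)"
    using notin CE_fin by simp
  finally show ?thesis .
qed

end


lemma alg_B:
  fixes k d Psi C B a Q So :: real
  assumes "k \<ge> 1" "d = k + 1" "Psi = 1 + 2 * C * (d - 1) / d + B" "C = a + Q"
    "So = 2 * Q - (k - 1) + (k - 1) * Psi - 2 * Q / d"
  shows "Psi - 2 * a / d = 1 + (B + So) / k"
proof -
  have k: "k = d - 1" using assms by simp
  have d0: "d \<noteq> 0" "d - 1 \<noteq> 0" using assms by auto
  show ?thesis using d0 unfolding assms(5) assms(3) assms(4) k
    by (simp add: field_simps)
qed

lemma alg_A:
  fixes k d Psi C B Sm :: real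
  assumes "k \<ge> 1" "d = k + 1" "Psi = 1 + 2 * C * (d - 1) / d + B"
    "Sm = 2 * C - k + k * Psi - 2 * C / d"
  shows "2 * C + 1 + B = 1 + Sm / k"
proof -
  have k: "k = d - 1" using assms by simp
  have d0: "d \<noteq> 0" "d - 1 \<noteq> 0" using assms by auto
  show ?thesis using d0 unfolding assms(4) assms(3) k
    by (simp add: field_simps)
qed

lemma alg_I:
  fixes d Psi C B Sm :: real
  assumes "d \<ge> 1" "Psi = 1 + 2 * C * (d - 1) / d + B"
    "Sm = 2 * C - (d - 1) + (d - 1) * Psi - 2 * C / d"
  shows "Psi = 1 + (B + Sm) / d"
proof -
  have d0: "d \<noteq> 0" using assms by auto
  show ?thesis using d0 unfolding assms(3) assms(2)
    by (simp add: field_simps)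
qed

context bb begin

definition dg :: "'a \<Rightarrow> real" where "dg v = real (deg V E v)"
definition cc :: "'a \<Rightarrow> 'a \<Rightarrow> real" where "cc u v = real (card (CE u v))"

definition dl :: "'a \<Rightarrow> real" where
  "dl x = 1 + 2 * cc (nxt x) x * (dg x - 1) / dg x
          - (if nxt x = j then 0 else 2 * (cc (nxt x) x + 1) / dg (nxt x))"

definition Psi :: "'a \<Rightarrow> real" where
  "Psi v = (\<Sum>x\<in>{x\<in>V - {j}. v \<in> side (nxt x) x}. dl x)"

definition phiB :: "'a \<Rightarrow> 'a \<Rightarrow> real" where
  "phiB u v = (if v = j then 0 else Psi v - 2 * (cc v u + 1) / dg v)"

definition phi :: "'a \<Rightarrow> 'a \<Rightarrow> real" where
  "phi u v = (if v = j then 0 else if j \<in> side u v then phiB u v else 2 * cc u v + 1 + phiB v u)"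

lemma nbrs_fin: "finite (nbrs V E v)" using finV by (simp add: nbrs_def)

lemma cc_sum: assumes "E u v" shows "cc u v = (\<Sum>w\<in>nbrs V E v - {u}. cc v w + 1)"
  using CE_card[OF assms] unfolding cc_def by (simp add: add.commute)

lemma Psi_j: "Psi j = 0"
proof -
  have e: "{x\<in>V - {j}. j \<in> side (nxt x) x} = {}"
  proof (rule ccontr)
    assume "{x\<in>V - {j}. j \<in> side (nxt x) x} \<noteq> {}"
    then obtain x where x: "x \<in> V" "x \<noteq> j" "j \<in> side (nxt x) x" by blast
    have "E x (nxt x)" "j \<in> side x (nxt x)" using nxt x by auto
    then show False using disj[of x "nxt x"] x(3) by blast
  qed
  show ?thesis unfolding Psi_def e by simp
qed

lemma Psi_step: assumes "v \<in> V" "v \<noteq> j" shows "Psi v = dl v + Psi (nxt v)"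
proof -
  let ?p = "nxt v"
  have Ep: "E v ?p" and jp: "j \<in> side v ?p" using nxt assms by auto
  let ?X = "\<lambda>y. {x\<in>V - {j}. y \<in> side (nxt x) x}"
  have "?X v = insert v (?X ?p)"
  proof (intro set_eqI iffI)
    fix x assume x: "x \<in> ?X v"
    show "x \<in> insert v (?X ?p)"
    proof (cases "x = v")
      case True then show ?thesis by simp
    next
      case False
      have xV: "x \<in> V" "x \<noteq> j" using x by auto
      have Ex: "E (nxt x) x" using nxt[OF xV] Esym by blast
      have "{v, ?p} \<noteq> {nxt x, x}"
      proof
        assume "{v, ?p} = {nxt x, x}"
        then have "x = ?p" "nxt x = v" using False by (auto simp: doubleton_eq_iff)
        then have "j \<in> side ?p v" using nxt[OF xV] by simp
        then show False using disj[OF Ep] jp by blast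
      qed
      then have "?p \<in> side (nxt x) x" using closure[of v "nxt x" x ?p] x Ep by blast
      then show ?thesis using xV by blast
    qed
  next
    fix x assume x: "x \<in> insert v (?X ?p)"
    show "x \<in> ?X v"
    proof (cases "x = v")
      case True then show ?thesis using assms v_in[of ?p v] Ep Esym by blast
    next
      case False
      then have xX: "x \<in> ?X ?p" using x by blast
      then have xV: "x \<in> V" "x \<noteq> j" by auto
      have "{?p, v} \<noteq> {nxt x, x}"
      proof
        assume "{?p, v} = {nxt x, x}"
        then have "x = ?p" "nxt x = v" using False by (auto simp: doubleton_eq_iff)
        then have "j \<in> side ?p v" using nxt[OF xV] by simp
        then show False using disj[OF Ep] jp by blast
      qed
      then have "v \<in> side (nxt x) x" using closure[of ?p "nxt x" x v] xX Ep Esym by blast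
      then show ?thesis using xV by blast
    qed
  qed
  moreover have "v \<notin> ?X ?p"
  proof
    assume "v \<in> ?X ?p"
    then have "?p \<in> side ?p v" by simp
    then show False using key[of ?p v] Ep Esym by blast
  qed
  moreover have "finite (?X ?p)" using finV by simp
  ultimately show ?thesis unfolding Psi_def by simp
qed

lemma Psi_eq: assumes "v \<in> V" "v \<noteq> j"
  shows "Psi v = 1 + 2 * cc (nxt v) v * (dg v - 1) / dg v + phiB v (nxt v)"
  using Psi_step[OF assms] Psi_j unfolding dl_def phiB_def by (cases "nxt v = j") auto

lemma phi_vp: assumes "v \<in> V" "v \<noteq> j" shows "phi v (nxt v) = phiB v (nxt v)"
  using nxt[OF assms] unfolding phi_def by (auto simp: phiB_def)

lemma other: assumes "v \<in> V" "v \<noteq> j" "E v w" "w \<noteq> nxt v"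
  shows "phi v w = 2 * (cc v w + 1) - 1 + Psi v - 2 * (cc v w + 1) / dg v"
proof -
  have "w \<noteq> j"
  proof
    assume "w = j" then have "j \<in> side v w" using v_in assms by blast
    then show False using nxt_eq assms by blast
  qed
  moreover have "j \<notin> side v w" using nxt_eq assms by blast
  ultimately show ?thesis unfolding phi_def phiB_def using assms by simp
qed

lemma deg_pos: assumes "E v w" shows "dg v \<ge> 1"
proof -
  have "w \<in> nbrs V E v" using assms EV2 by (auto simp: nbrs_def)
  then have "card (nbrs V E v) \<noteq> 0" using nbrs_fin by auto
  then show ?thesis unfolding dg_def deg_def by simp
qed

lemma card_minus: assumes "E v w" shows "real (card (nbrs V E v - {w})) = dg v - 1"
proof -
  have "w \<in> nbrs V E v" using assms EV2 by (auto simp: nbrs_def)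
  moreover have "card (nbrs V E v) \<ge> 1" using calculation nbrs_fin
    by (metis One_nat_def Suc_leI card_gt_0_iff empty_iff)
  ultimately show ?thesis using nbrs_fin unfolding dg_def deg_def
    by (simp add: card_Diff_singleton of_nat_diff)
qed

lemma sum_others: assumes "v \<in> V" "v \<noteq> j" "A \<subseteq> nbrs V E v" "nxt v \<notin> A"
  shows "(\<Sum>w\<in>A. phi v w) = 2 * (\<Sum>w\<in>A. cc v w + 1) - real (card A) + real (card A) * Psi v
      - 2 * (\<Sum>w\<in>A. cc v w + 1) / dg v"
proof -
  have "(\<Sum>w\<in>A. phi v w) = (\<Sum>w\<in>A. 2 * (cc v w + 1) - 1 + Psi v - 2 * (cc v w + 1) / dg v)"
    by (rule sum.cong) (use assms other in \<open>auto simp: nbrs_def\<close>)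
  also have "\<dots> = 2 * (\<Sum>w\<in>A. cc v w + 1) - real (card A) + real (card A) * Psi v
      - 2 * (\<Sum>w\<in>A. cc v w + 1) / dg v"
    by (simp add: sum.distrib sum_subtractf sum_distrib_left[symmetric] sum_divide_distrib[symmetric])
  finally show ?thesis .
qed

end

context bb begin

lemma step_sum: assumes "E u v"
  shows "(\<Sum>w\<in>V. bbrw_step V E u v w * f w) =
    (if nbrs V E v - {u} \<noteq> {} then (\<Sum>w\<in>nbrs V E v - {u}. f w) / real (card (nbrs V E v - {u}))
     else f u)"
proof (cases "nbrs V E v - {u} = {}")
  case True
  have uV: "u \<in> V" using EV1 assms by blast
  have "(\<Sum>w\<in>V. bbrw_step V E u v w * f w) = (\<Sum>w\<in>V. if w = u then f w else 0)"
  proof (rule sum.cong)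
    fix w
    have "bbrw_step V E u v w = (if w = u then 1 else 0)" unfolding bbrw_step_def Let_def
      using True by (simp only: if_False not_True_eq_False refl)
    then show "bbrw_step V E u v w * f w = (if w = u then f w else 0)" by simp
  qed simp
  also have "\<dots> = f u" using uV finV by simp
  finally have r: "(\<Sum>w\<in>V. bbrw_step V E u v w * f w) = f u" .
  have n: "\<not> (nbrs V E v - {u} \<noteq> {})" using True by blast
  show ?thesis unfolding if_not_P[OF n] r ..
next
  case False
  let ?S = "nbrs V E v - {u}"
  have SV: "?S \<subseteq> V" by (auto simp: nbrs_def)
  have "(\<Sum>w\<in>V. bbrw_step V E u v w * f w) = (\<Sum>w\<in>V. if w \<in> ?S then f w / real (card ?S) else 0)"
  proof (rule sum.cong)
    fix w
    have "bbrw_step V E u v w = (if w \<in> ?S then 1 / real (card ?S) else 0)" unfolding bbrw_step_def Let_def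
      using False by (simp only: if_True not_False_eq_True)
    then show "bbrw_step V E u v w * f w = (if w \<in> ?S then f w / real (card ?S) else 0)" by simp
  qed simp
  also have "\<dots> = (\<Sum>w\<in>{w\<in>V. w \<in> ?S}. f w / real (card ?S))"
    using finV by (simp add: sum.inter_filter)
  also have "{w\<in>V. w \<in> ?S} = ?S" using SV by blast
  finally show ?thesis using False by (simp add: sum_divide_distrib)
qed

lemma bellman: assumes "E u v" "v \<noteq> j"
  shows "phi u v = 1 + (\<Sum>w\<in>V. bbrw_step V E u v w * phi v w)"
proof -
  have vV: "v \<in> V" using EV2 assms by blast
  have Evu: "E v u" using Esym assms by blast
  let ?S = "nbrs V E v - {u}"
  let ?p = "nxt v"
  have Ep: "E v ?p" and jp: "j \<in> side v ?p" using nxt vV assms by auto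
  have dpos: "dg v \<ge> 1" using deg_pos Ep by blast
  have cardS: "real (card ?S) = dg v - 1" using card_minus Evu .
  have finS: "finite ?S" using nbrs_fin by simp
  show ?thesis
  proof (cases "j \<in> side u v")
    case True
    have pu: "?p \<noteq> u"
    proof
      assume "?p = u" then show False using disj[OF assms(1)] True jp by blast
    qed
    have pS: "?p \<in> ?S" using Ep pu EV2 by (auto simp: nbrs_def)
    then have Sne: "?S \<noteq> {}" by blast
    have k1: "dg v - 1 \<ge> 1"
    proof -
      have "card ?S \<ge> 1" using pS finS by (metis One_nat_def Suc_leI card_gt_0_iff empty_iff)
      then show ?thesis using cardS by linarith
    qed
    have "(\<Sum>w\<in>V. bbrw_step V E u v w * phi v w) = (\<Sum>w\<in>?S. phi v w) / (dg v - 1)"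
      using step_sum[OF assms(1)] Sne cardS by simp
    also have "(\<Sum>w\<in>?S. phi v w) = phi v ?p + (\<Sum>w\<in>?S - {?p}. phi v w)"
      using sum.remove[OF finS pS] .
    also have "phi v ?p = phiB v ?p" using phi_vp vV assms by blast
    finally have rhs: "(\<Sum>w\<in>V. bbrw_step V E u v w * phi v w) = (phiB v ?p + (\<Sum>w\<in>?S - {?p}. phi v w)) / (dg v - 1)" .
    let ?Q = "(\<Sum>w\<in>?S - {?p}. cc v w + 1)"
    have so: "(\<Sum>w\<in>?S - {?p}. phi v w) = 2 * ?Q - (dg v - 1 - 1) + (dg v - 1 - 1) * Psi v - 2 * ?Q / dg v"
    proof -
      have c1: "card ?S \<ge> 1" using pS finS by (metis One_nat_def Suc_leI card_gt_0_iff empty_iff)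
      have c: "real (card (?S - {?p})) = dg v - 1 - 1" using cardS pS finS c1 by (simp add: card_Diff_singleton of_nat_diff)
      show ?thesis using sum_others[of v "?S - {?p}"] vV assms c by auto
    qed
    have C: "cc ?p v = (cc v u + 1) + ?Q"
    proof -
      have "cc ?p v = (\<Sum>w\<in>nbrs V E v - {?p}. cc v w + 1)" using cc_sum Ep Esym by blast
      also have "nbrs V E v - {?p} = insert u (?S - {?p})" using Evu pu EV2 by (auto simp: nbrs_def)
      also have "(\<Sum>w\<in>insert u (?S - {?p}). cc v w + 1) = (cc v u + 1) + ?Q" using finS by simp
      finally show ?thesis .
    qed
    have lhs: "phi u v = Psi v - 2 * (cc v u + 1) / dg v" using True assms unfolding phi_def phiB_def by simp
    show ?thesis unfolding lhs rhs
      by (rule alg_B[OF k1 _ Psi_eq[OF vV assms(2)] C so]) simp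
  next
    case False
    have jA: "j \<in> side v u" using cover[OF assms(1) jV] False by blast
    have pu: "?p = u" using nxt_eq Evu jA by blast
    have C: "cc u v = (\<Sum>w\<in>?S. cc v w + 1)" using cc_sum assms(1) by blast
    have lhs: "phi u v = 2 * cc u v + 1 + phiB v u" using False assms unfolding phi_def by simp
    have pvu: "phi v u = phiB v u" using phi_vp vV assms pu by metis
    show ?thesis
    proof (cases "?S = {}")
      case True
      then have "cc u v = 0" using C by (simp only: sum.empty)
      then show ?thesis using lhs pvu step_sum[OF assms(1)] True by simp
    next
      case Sne: False
      have k1: "dg v - 1 \<ge> 1"
      proof -
        have "card ?S \<ge> 1" using Sne finS by (metis One_nat_def Suc_leI card_gt_0_iff)
        then show ?thesis using cardS by linarith
      qed
      have rhs: "(\<Sum>w\<in>V. bbrw_step V E u v w * phi v w) = (\<Sum>w\<in>?S. phi v w) / (dg v - 1)"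
        using step_sum[OF assms(1)] Sne cardS by simp
      have so: "(\<Sum>w\<in>?S. phi v w) = 2 * cc u v - (dg v - 1) + (dg v - 1) * Psi v - 2 * cc u v / dg v"
        using sum_others[of v ?S] vV assms cardS pu C by auto
      have Pe: "Psi v = 1 + 2 * cc u v * (dg v - 1) / dg v + phiB v u"
        using Psi_eq[OF vV assms(2)] pu by simp
      show ?thesis unfolding lhs rhs
        by (rule alg_A[OF k1 _ Pe so]) simp
    qed
  qed
qed

lemma init: assumes "v \<in> V" "v \<noteq> j"
  shows "Psi v = 1 + (\<Sum>w\<in>nbrs V E v. phi v w) / dg v"
proof -
  let ?p = "nxt v"
  let ?N = "nbrs V E v"
  have Ep: "E v ?p" using nxt assms by auto
  have pN: "?p \<in> ?N" using Ep EV2 by (auto simp: nbrs_def)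
  have dpos: "dg v \<ge> 1" using deg_pos Ep by blast
  have finN: "finite ?N" using nbrs_fin .
  have "(\<Sum>w\<in>?N. phi v w) = phi v ?p + (\<Sum>w\<in>?N - {?p}. phi v w)"
    using sum.remove[OF finN pN] .
  also have "phi v ?p = phiB v ?p" using phi_vp assms by blast
  also have "(\<Sum>w\<in>?N - {?p}. phi v w) = 2 * cc ?p v - (dg v - 1) + (dg v - 1) * Psi v - 2 * cc ?p v / dg v"
  proof -
    have c: "real (card (?N - {?p})) = dg v - 1" using card_minus Ep .
    have C: "cc ?p v = (\<Sum>w\<in>?N - {?p}. cc v w + 1)" using cc_sum Ep Esym by blast
    show ?thesis using sum_others[of v "?N - {?p}"] assms c C by auto
  qed
  finally have s: "(\<Sum>w\<in>?N. phi v w) = phiB v ?p + (2 * cc ?p v - (dg v - 1) + (dg v - 1) * Psi v - 2 * cc ?p v / dg v)" .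
  show ?thesis unfolding s
    by (rule alg_I[OF dpos Psi_eq[OF assms]]) simp
qed

end


lemma alg_N:
  fixes d C a B :: real
  assumes "d \<ge> 2" "C \<ge> a" "a \<ge> 0" "B \<ge> 0"
  shows "1 + 2 * C * (d - 1) / d + B - 2 * a / d \<ge> 0"
proof -
  have "C * 1 \<le> C * (d - 1)" using assms by (intro mult_left_mono) auto
  then have "2 * C * (d - 1) - 2 * a \<ge> 0" using assms by linarith
  then have "(2 * C * (d - 1) - 2 * a) / d \<ge> 0" using assms by simp
  then have "2 * C * (d - 1) / d - 2 * a / d \<ge> 0" by (simp add: diff_divide_distrib)
  then show ?thesis using assms by linarith
qed

context bb begin

lemma cc_nonneg: "cc u v \<ge> 0" unfolding cc_def by simp

lemma phiB_nonneg_aux: "\<forall>u v. card (side u v) = n \<longrightarrow> E u v \<longrightarrow> j \<in> side u v \<longrightarrow> phiB u v \<ge> 0"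
proof (induction n rule: less_induct)
  case (less n)
  show ?case
  proof (intro allI impI)
    fix u v assume n: "card (side u v) = n" and E: "E u v" and J: "j \<in> side u v"
    show "phiB u v \<ge> 0"
    proof (cases "v = j")
      case True then show ?thesis by (simp add: phiB_def)
    next
      case False
      have vV: "v \<in> V" using EV2 E by blast
      have Evu: "E v u" using Esym E by blast
      let ?p = "nxt v"
      let ?S = "nbrs V E v - {u}"
      have Ep: "E v ?p" and jp: "j \<in> side v ?p" using nxt vV False by auto
      have pu: "?p \<noteq> u"
      proof
        assume "?p = u" then show False using disj[OF E] J jp by blast
      qed
      have sub: "side v ?p \<subseteq> side u v" using sub_side[OF E Ep pu] .
      have "v \<in> side u v" "v \<notin> side v ?p" using v_in[OF E] key[OF Ep] by auto
      then have psub: "side v ?p \<subset> side u v" using sub by blast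
      have fin: "finite (side u v)" using side_V[OF E] finV finite_subset by blast
      have "card (side v ?p) < n" using psubset_card_mono[OF fin psub] n by simp
      then have IH: "phiB v ?p \<ge> 0" using less Ep jp by blast
      have finS: "finite ?S" using nbrs_fin by simp
      have pS: "?p \<in> ?S" using Ep pu EV2 by (auto simp: nbrs_def)
      have "card ?S \<ge> 1" using pS finS by (metis One_nat_def Suc_leI card_gt_0_iff empty_iff)
      then have d2: "dg v \<ge> 2" using card_minus[OF Evu] by linarith
      let ?Q = "(\<Sum>w\<in>?S - {?p}. cc v w + 1)"
      have C: "cc ?p v = (cc v u + 1) + ?Q"
      proof -
        have "cc ?p v = (\<Sum>w\<in>nbrs V E v - {?p}. cc v w + 1)" using cc_sum Ep Esym by blast
        also have "nbrs V E v - {?p} = insert u (?S - {?p})" using Evu pu EV2 by (auto simp: nbrs_def)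
        also have "(\<Sum>w\<in>insert u (?S - {?p}). cc v w + 1) = (cc v u + 1) + ?Q" using finS by simp
        finally show ?thesis .
      qed
      have Q0: "?Q \<ge> 0" by (intro sum_nonneg) (simp add: add_nonneg_nonneg cc_nonneg)
      have "phiB u v = 1 + 2 * cc ?p v * (dg v - 1) / dg v + phiB v ?p - 2 * (cc v u + 1) / dg v"
        using Psi_eq[OF vV False] False unfolding phiB_def by simp
      also have "\<dots> \<ge> 0" using alg_N[OF d2 _ _ IH, of "cc v u + 1" "cc ?p v"] C Q0 cc_nonneg[of v u] by simp
      finally show ?thesis .
    qed
  qed
qed

lemma phiB_nonneg: "E u v \<Longrightarrow> j \<in> side u v \<Longrightarrow> phiB u v \<ge> 0"
  using phiB_nonneg_aux by blast

lemma phi_nonneg: assumes "E u v" shows "phi u v \<ge> 0"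
proof (cases "v = j")
  case True then show ?thesis by (simp add: phi_def)
next
  case False
  show ?thesis
  proof (cases "j \<in> side u v")
    case True then show ?thesis using phiB_nonneg assms False by (simp add: phi_def)
  next
    case nj: False
    have "j \<in> side v u" using cover[OF assms jV] nj by blast
    then have "phiB v u \<ge> 0" using phiB_nonneg Esym assms by blast
    then show ?thesis using nj False cc_nonneg[of u v] by (simp add: phi_def)
  qed
qed

lemma Psi_nonneg: assumes "v \<in> V" "v \<noteq> j" shows "Psi v \<ge> 0"
proof -
  have Ep: "E v (nxt v)" and jp: "j \<in> side v (nxt v)" using nxt assms by auto
  have "dg v \<ge> 1" using deg_pos Ep by blast
  moreover have "phiB v (nxt v) \<ge> 0" using phiB_nonneg Ep jp by blast
  moreover have "cc (nxt v) v \<ge> 0" by (rule cc_nonneg)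
  ultimately show ?thesis using Psi_eq[OF assms] by simp
qed

end

context bb begin

definition L :: "nat \<Rightarrow> 'a list set" where
  "L n = {xs. set xs \<subseteq> V \<and> length xs = Suc n \<and> j \<notin> set xs}"

definition T :: "'a list \<Rightarrow> 'a \<Rightarrow> real" where
  "T ys w = (if length ys = 1 then (if w \<in> nbrs V E (hd ys) then 1 / real (deg V E (hd ys)) else 0)
             else bbrw_step V E (ys ! (length ys - 2)) (last ys) w)"

lemma prob_snoc: assumes "ys \<noteq> []"
  shows "bbrw_walk_prob V E i (ys @ [w]) = bbrw_walk_prob V E i ys * T ys w"
proof (cases "length ys = 1")
  case True
  then obtain a where a: "ys = [a]" by (cases ys) auto
  show ?thesis unfolding a by (simp add: bbrw_walk_prob_def T_def)
next
  case False
  define n where "n = length ys - 2"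
  have n: "length ys = Suc (Suc n)" using False assms unfolding n_def by (cases ys) auto
  have hd: "hd (ys @ [w]) = hd ys" using assms by simp
  have i1: "(ys @ [w]) ! 1 = ys ! 1" "(ys @ [w]) ! 0 = ys ! 0" using n by (simp_all add: nth_append)
  have lst: "last ys = ys ! Suc n" using n assms by (simp add: last_conv_nth)
  have pr: "(\<Prod>m<length (ys @ [w]) - 2. bbrw_step V E ((ys @ [w]) ! m) ((ys @ [w]) ! (m + 1)) ((ys @ [w]) ! (m + 2)))
    = (\<Prod>m<length ys - 2. bbrw_step V E (ys ! m) (ys ! (m + 1)) (ys ! (m + 2))) * bbrw_step V E (ys ! n) (last ys) w"
  proof -
    have "(\<Prod>m<length (ys @ [w]) - 2. bbrw_step V E ((ys @ [w]) ! m) ((ys @ [w]) ! (m + 1)) ((ys @ [w]) ! (m + 2)))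
      = (\<Prod>m<Suc n. bbrw_step V E ((ys @ [w]) ! m) ((ys @ [w]) ! (m + 1)) ((ys @ [w]) ! (m + 2)))"
      using n by simp
    also have "\<dots> = (\<Prod>m<n. bbrw_step V E ((ys @ [w]) ! m) ((ys @ [w]) ! (m + 1)) ((ys @ [w]) ! (m + 2)))
       * bbrw_step V E ((ys @ [w]) ! n) ((ys @ [w]) ! (n + 1)) ((ys @ [w]) ! (n + 2))"
      by simp
    also have "(\<Prod>m<n. bbrw_step V E ((ys @ [w]) ! m) ((ys @ [w]) ! (m + 1)) ((ys @ [w]) ! (m + 2)))
      = (\<Prod>m<length ys - 2. bbrw_step V E (ys ! m) (ys ! (m + 1)) (ys ! (m + 2)))"
      using n by (intro prod.cong) (auto simp: nth_append)
    also have "bbrw_step V E ((ys @ [w]) ! n) ((ys @ [w]) ! (n + 1)) ((ys @ [w]) ! (n + 2))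
       = bbrw_step V E (ys ! n) (last ys) w" using n lst by (simp add: nth_append)
    finally show ?thesis .
  qed
  have t: "T ys w = bbrw_step V E (ys ! n) (last ys) w" unfolding T_def using False n by simp
  show ?thesis unfolding bbrw_walk_prob_def pr t using assms n hd i1 by simp
qed

lemma step_nonneg: "bbrw_step V E u v w \<ge> 0"
  by (simp add: bbrw_step_def Let_def)

lemma prob_nonneg: "bbrw_walk_prob V E i xs \<ge> 0"
proof -
  have "0 \<le> (\<Prod>m<length xs - 2. bbrw_step V E (xs ! m) (xs ! (m + 1)) (xs ! (m + 2)))"
    by (intro prod_nonneg) (simp add: step_nonneg)
  then show ?thesis by (simp add: bbrw_walk_prob_def)
qed

lemma prob_edge: "bbrw_walk_prob V E i xs \<noteq> 0 \<Longrightarrow> length xs \<ge> 2 \<Longrightarrow> E (xs ! (length xs - 2)) (last xs)"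
proof (induction xs rule: rev_induct)
  case Nil then show ?case by simp
next
  case (snoc w ys)
  have ne: "ys \<noteq> []" using snoc.prems by auto
  have p: "bbrw_walk_prob V E i (ys @ [w]) = bbrw_walk_prob V E i ys * T ys w" using prob_snoc[OF ne] .
  then have p0: "bbrw_walk_prob V E i ys \<noteq> 0" "T ys w \<noteq> 0" using snoc.prems by auto
  have idx: "(ys @ [w]) ! (length (ys @ [w]) - 2) = last ys" using ne
    by (simp add: nth_append last_conv_nth)
  show ?case
  proof (cases "length ys = 1")
    case True
    then obtain a where a: "ys = [a]" by (cases ys) auto
    have "w \<in> nbrs V E a" using p0(2) unfolding T_def a by (auto split: if_splits)
    then show ?thesis unfolding idx using a by (simp add: nbrs_def)
  next
    case False
    then have l2: "length ys \<ge> 2" using ne by (cases ys) (auto simp: Suc_le_eq)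
    let ?u = "ys ! (length ys - 2)" and ?v = "last ys"
    have uv: "E ?u ?v" using snoc.IH p0(1) l2 by blast
    have st: "bbrw_step V E ?u ?v w \<noteq> 0" using p0(2) False unfolding T_def by simp
    have "E ?v w \<or> w = ?u"
      using st unfolding bbrw_step_def Let_def by (auto simp: nbrs_def split: if_splits)
    then have "E ?v w" using uv Esym by blast
    then show ?thesis unfolding idx by simp
  qed
qed

lemma L_fin: "finite (L n)"
  by (rule finite_subset[OF _ finite_lists_length_eq[OF finV, of "Suc n"]]) (auto simp: L_def)

lemma L_Suc: "L (Suc n) = (\<lambda>(ys, w). ys @ [w]) ` (L n \<times> (V - {j}))"
proof (intro set_eqI iffI)
  fix xs assume xs: "xs \<in> L (Suc n)"
  then have ne: "xs \<noteq> []" by (auto simp: L_def)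
  have "xs = butlast xs @ [last xs]" using ne by simp
  moreover have "butlast xs \<in> L n" using xs by (auto simp: L_def dest: in_set_butlastD)
  moreover have "last xs \<in> V - {j}" using xs ne last_in_set[OF ne] by (auto simp: L_def)
  ultimately show "xs \<in> (\<lambda>(ys, w). ys @ [w]) ` (L n \<times> (V - {j}))" by force
next
  fix xs assume "xs \<in> (\<lambda>(ys, w). ys @ [w]) ` (L n \<times> (V - {j}))"
  then show "xs \<in> L (Suc n)" by (auto simp: L_def)
qed

lemma sum_L_Suc: "(\<Sum>xs\<in>L (Suc n). f xs) = (\<Sum>ys\<in>L n. \<Sum>w\<in>V - {j}. f (ys @ [w]))"
proof -
  have inj: "inj_on (\<lambda>(ys, w). ys @ [w]) (L n \<times> (V - {j}))" by (auto simp: inj_on_def)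
  have "(\<Sum>xs\<in>L (Suc n). f xs) = (\<Sum>(ys, w)\<in>L n \<times> (V - {j}). f (ys @ [w]))"
    unfolding L_Suc by (subst sum.reindex[OF inj]) (simp add: case_prod_beta')
  also have "\<dots> = (\<Sum>ys\<in>L n. \<Sum>w\<in>V - {j}. f (ys @ [w]))"
    by (rule sum.cartesian_product[symmetric])
  finally show ?thesis .
qed

definition val :: "'a \<Rightarrow> 'a list \<Rightarrow> real" where
  "val i xs = (if length xs = 1 then Psi i else phi (xs ! (length xs - 2)) (last xs))"

definition R :: "'a \<Rightarrow> nat \<Rightarrow> real" where
  "R i n = (\<Sum>xs\<in>L n. bbrw_walk_prob V E i xs * val i xs)"

lemma tail_L: "bbrw_tail V E i j n = (\<Sum>xs\<in>L n. bbrw_walk_prob V E i xs)"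
  unfolding bbrw_tail_def L_def ..

lemma drop_j: "(g :: 'a \<Rightarrow> real) j = 0 \<Longrightarrow> (\<Sum>w\<in>V - {j}. g w) = (\<Sum>w\<in>V. g w)"
  using sum_diff1[OF finV, of g j] jV by simp

lemma val_step: assumes iV: "i \<in> V" and ij: "i \<noteq> j" and ys: "ys \<in> L n"
  and p: "bbrw_walk_prob V E i ys \<noteq> 0"
  shows "(\<Sum>w\<in>V - {j}. T ys w * val i (ys @ [w])) = val i ys - 1"
proof (cases "length ys = 1")
  case True
  then obtain a where a: "ys = [a]" by (cases ys) auto
  have ai: "a = i" using p unfolding a bbrw_walk_prob_def by (auto split: if_splits)
  have "(\<Sum>w\<in>V - {j}. T ys w * val i (ys @ [w])) = (\<Sum>w\<in>V - {j}. (if w \<in> nbrs V E i then phi i w / dg i else 0))"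
    unfolding a ai by (intro sum.cong) (auto simp: T_def val_def dg_def)
  also have "\<dots> = (\<Sum>w\<in>V. (if w \<in> nbrs V E i then phi i w / dg i else 0))"
    by (rule drop_j) (simp add: phi_def)
  also have "\<dots> = (\<Sum>w\<in>{w\<in>V. w \<in> nbrs V E i}. phi i w / dg i)"
    using finV by (simp add: sum.inter_filter)
  also have "{w\<in>V. w \<in> nbrs V E i} = nbrs V E i" by (auto simp: nbrs_def)
  also have "(\<Sum>w\<in>nbrs V E i. phi i w / dg i) = Psi i - 1"
    using init[OF iV ij] by (simp add: sum_divide_distrib)
  finally show ?thesis unfolding a ai by (simp add: val_def)
next
  case False
  have ne: "ys \<noteq> []" using ys by (auto simp: L_def)
  then have l2: "length ys \<ge> 2" using False by (cases ys) (auto simp: Suc_le_eq)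
  let ?u = "ys ! (length ys - 2)" and ?v = "last ys"
  have uv: "E ?u ?v" using prob_edge p l2 by blast
  have vj: "?v \<noteq> j" using ys last_in_set[OF ne] by (auto simp: L_def)
  have idx: "(ys @ [w]) ! (length (ys @ [w]) - 2) = last ys" for w using ne
    by (simp add: nth_append last_conv_nth)
  have "(\<Sum>w\<in>V - {j}. T ys w * val i (ys @ [w])) = (\<Sum>w\<in>V - {j}. bbrw_step V E ?u ?v w * phi ?v w)"
    by (intro sum.cong) (use False l2 idx in \<open>auto simp: T_def val_def\<close>)
  also have "\<dots> = (\<Sum>w\<in>V. bbrw_step V E ?u ?v w * phi ?v w)"
    by (rule drop_j) (simp add: phi_def)
  also have "\<dots> = phi ?u ?v - 1" using bellman[OF uv vj] by simp
  finally show ?thesis using False by (simp add: val_def)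
qed

lemma R_Suc: assumes iV: "i \<in> V" and ij: "i \<noteq> j"
  shows "R i (Suc n) = R i n - bbrw_tail V E i j n"
proof -
  have "R i (Suc n) = (\<Sum>ys\<in>L n. \<Sum>w\<in>V - {j}. bbrw_walk_prob V E i (ys @ [w]) * val i (ys @ [w]))"
    unfolding R_def by (rule sum_L_Suc)
  also have "\<dots> = (\<Sum>ys\<in>L n. bbrw_walk_prob V E i ys * val i ys - bbrw_walk_prob V E i ys)"
  proof (rule sum.cong)
    fix ys assume ys: "ys \<in> L n"
    have ne: "ys \<noteq> []" using ys by (auto simp: L_def)
    have "(\<Sum>w\<in>V - {j}. bbrw_walk_prob V E i (ys @ [w]) * val i (ys @ [w]))
        = bbrw_walk_prob V E i ys * (\<Sum>w\<in>V - {j}. T ys w * val i (ys @ [w]))"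
      by (simp add: prob_snoc[OF ne] sum_distrib_left mult.assoc)
    also have "\<dots> = bbrw_walk_prob V E i ys * (val i ys - 1)"
      by (cases "bbrw_walk_prob V E i ys = 0") (use val_step[OF iV ij ys] in auto)
    finally show "(\<Sum>w\<in>V - {j}. bbrw_walk_prob V E i (ys @ [w]) * val i (ys @ [w]))
        = bbrw_walk_prob V E i ys * val i ys - bbrw_walk_prob V E i ys" by (simp add: algebra_simps)
  qed simp
  also have "\<dots> = R i n - bbrw_tail V E i j n"
    unfolding R_def tail_L by (simp add: sum_subtractf)
  finally show ?thesis .
qed

lemma R_0: assumes iV: "i \<in> V" and ij: "i \<noteq> j" shows "R i 0 = Psi i"
proof -
  have L0: "L 0 = (\<lambda>x. [x]) ` (V - {j})"
  proof (intro set_eqI iffI)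
    fix xs assume "xs \<in> L 0"
    then obtain x where "xs = [x]" "x \<in> V - {j}" unfolding L_def by (cases xs) auto
    then show "xs \<in> (\<lambda>x. [x]) ` (V - {j})" by blast
  qed (auto simp: L_def)
  have "R i 0 = (\<Sum>x\<in>V - {j}. bbrw_walk_prob V E i [x] * val i [x])"
    unfolding R_def L0 by (subst sum.reindex) (auto simp: inj_on_def)
  also have "\<dots> = (\<Sum>x\<in>V - {j}. if x = i then Psi i else 0)"
    by (intro sum.cong) (auto simp: bbrw_walk_prob_def val_def)
  also have "\<dots> = Psi i" using iV ij finV by simp
  finally show ?thesis .
qed

lemma inv: assumes iV: "i \<in> V" and ij: "i \<noteq> j"
  shows "(\<Sum>m<n. bbrw_tail V E i j m) + R i n = Psi i"
proof (induction n)
  case 0 then show ?case using R_0[OF iV ij] by simp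
next
  case (Suc n) then show ?case using R_Suc[OF iV ij, of n] by simp
qed

lemma R_nonneg: assumes iV: "i \<in> V" and ij: "i \<noteq> j" shows "R i n \<ge> 0"
  unfolding R_def
proof (rule sum_nonneg)
  fix xs assume xs: "xs \<in> L n"
  show "bbrw_walk_prob V E i xs * val i xs \<ge> 0"
  proof (cases "bbrw_walk_prob V E i xs = 0")
    case True then show ?thesis by simp
  next
    case False
    have "val i xs \<ge> 0"
    proof (cases "length xs = 1")
      case True then show ?thesis using Psi_nonneg[OF iV ij] by (simp add: val_def)
    next
      case l: False
      have "length xs \<ge> 2" using xs l by (auto simp: L_def)
      then have "E (xs ! (length xs - 2)) (last xs)" using prob_edge False by blast
      then show ?thesis using l phi_nonneg by (simp add: val_def)
    qed
    then show ?thesis using prob_nonneg by simp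
  qed
qed

definition M :: "'a \<Rightarrow> real" where
  "M i = \<bar>Psi i\<bar> + (\<Sum>a\<in>V. \<Sum>b\<in>V. \<bar>phi a b\<bar>)"

lemma R_le: "R i n \<le> M i * bbrw_tail V E i j n"
proof -
  have dd: "(\<Sum>a\<in>V. \<Sum>b\<in>V. \<bar>phi a b\<bar>) \<ge> 0" by (intro sum_nonneg) auto
  have vb: "val i xs \<le> M i" if xs: "xs \<in> L n" for xs
  proof (cases "length xs = 1")
    case True then show ?thesis using dd by (simp add: val_def M_def)
  next
    case False
    have ne: "xs \<noteq> []" using xs by (auto simp: L_def)
    have uV: "xs ! (length xs - 2) \<in> V" using xs ne by (auto simp: L_def)
    have vV: "last xs \<in> V" using xs last_in_set[OF ne] by (auto simp: L_def)
    have "phi (xs ! (length xs - 2)) (last xs) \<le> \<bar>phi (xs ! (length xs - 2)) (last xs)\<bar>" by simp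
    also have "\<dots> \<le> (\<Sum>b\<in>V. \<bar>phi (xs ! (length xs - 2)) b\<bar>)"
      by (rule member_le_sum[OF vV]) (auto simp: finV)
    also have "\<dots> \<le> (\<Sum>a\<in>V. \<Sum>b\<in>V. \<bar>phi a b\<bar>)"
      by (rule member_le_sum[OF uV, where f="\<lambda>a. \<Sum>b\<in>V. \<bar>phi a b\<bar>"]) (auto simp: finV intro: sum_nonneg)
    finally show ?thesis using False by (simp add: val_def M_def)
  qed
  have "R i n \<le> (\<Sum>xs\<in>L n. bbrw_walk_prob V E i xs * M i)"
    unfolding R_def by (intro sum_mono mult_left_mono vb prob_nonneg)
  also have "\<dots> = (\<Sum>xs\<in>L n. bbrw_walk_prob V E i xs) * M i" by (rule sum_distrib_right[symmetric])
  also have "\<dots> = M i * bbrw_tail V E i j n" unfolding tail_L by (rule mult.commute)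
  finally show ?thesis .
qed

lemma tail_nonneg: "bbrw_tail V E i j n \<ge> 0"
  unfolding tail_L by (intro sum_nonneg prob_nonneg)

lemma main_sums: assumes iV: "i \<in> V" and ij: "i \<noteq> j"
  shows "(\<lambda>n. bbrw_tail V E i j n) sums Psi i"
proof -
  have ps: "(\<Sum>m<n. bbrw_tail V E i j m) = Psi i - R i n" for n using inv[OF iV ij, of n] by simp
  have le: "(\<Sum>m<n. bbrw_tail V E i j m) \<le> Psi i" for n
    unfolding ps using R_nonneg[OF iV ij, of n] by linarith
  have "summable (\<lambda>n. bbrw_tail V E i j n)"
    by (rule summableI_nonneg_bounded[where x="Psi i", OF tail_nonneg le])
  then have t0: "(\<lambda>n. bbrw_tail V E i j n) \<longlonglongrightarrow> 0" by (rule summable_LIMSEQ_zero)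
  then have "(\<lambda>n. M i * bbrw_tail V E i j n) \<longlonglongrightarrow> M i * 0" by (intro tendsto_mult tendsto_const)
  then have t1: "(\<lambda>n. M i * bbrw_tail V E i j n) \<longlonglongrightarrow> 0" by simp
  have e1: "\<forall>\<^sub>F n in sequentially. 0 \<le> R i n" using R_nonneg[OF iV ij] by simp
  have e2: "\<forall>\<^sub>F n in sequentially. R i n \<le> M i * bbrw_tail V E i j n" using R_le by simp
  have r0: "(\<lambda>n. R i n) \<longlonglongrightarrow> 0"
    by (rule real_tendsto_sandwich[OF e1 e2 tendsto_const t1])
  have "(\<lambda>n. Psi i - R i n) \<longlonglongrightarrow> Psi i - 0" by (intro tendsto_diff tendsto_const r0)
  then have "(\<lambda>n. Psi i - R i n) \<longlonglongrightarrow> Psi i" by simp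
  then show ?thesis unfolding sums_def ps .
qed

end

context bb begin

lemma formula:
  assumes P: "is_path E vs" and hj: "last vs = j" and l: "2 \<le> length vs"
  shows "Psi (hd vs) =
    ((\<Sum>n\<in>{..<length vs - 1}.
        1 + 2 * real (card (comp_edges E (vs ! n) (vs ! (n + 1))))
              * (real (deg V E (vs ! n)) - 1) / real (deg V E (vs ! n)))
     - (\<Sum>n\<in>{1..<length vs - 1}.
          2 * real (card (comp_edges E (vs ! (n - 1)) (vs ! n))) / real (deg V E (vs ! n)))
     - (\<Sum>n\<in>{1..<length vs - 1}. 2 / real (deg V E (vs ! n))))"
proof -
  define N where "N = length vs - 1"
  have lN: "length vs = Suc N" and N1: "N \<ge> 1" using l unfolding N_def by auto
  have ne: "vs \<noteq> []" using l by auto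
  have dist: "distinct vs" using P by (simp add: is_path_def)
  have Estep: "E (vs ! m) (vs ! Suc m)" if "m < N" for m
    using P that lN unfolding is_path_def by simp
  have vN: "vs ! N = j" using hj ne lN by (simp add: last_conv_nth)
  have inV: "vs ! m \<in> V" if "m \<le> N" for m
  proof (cases "m < N")
    case True then show ?thesis using Estep EV1 by blast
  next
    case False then show ?thesis using that vN jV by (metis le_antisym not_less)
  qed
  have neqj: "vs ! m \<noteq> j" if "m < N" for m
    using that vN lN nth_eq_iff_index_eq[OF dist, of m N] by auto
  have nxt_vs: "nxt (vs ! n) = vs ! Suc n" if n: "n < N" for n
  proof -
    have "m \<le> N \<longrightarrow> vs ! m \<in> side (vs ! n) (vs ! Suc n)" if "Suc n \<le> m" for m
      using that
    proof (induction m rule: dec_induct)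
      case base then show ?case using v_in Estep n by blast
    next
      case (step m)
      show ?case
      proof
        assume mN: "Suc m \<le> N"
        have a: "vs ! m \<in> side (vs ! n) (vs ! Suc n)" using step mN by simp
        have e: "E (vs ! m) (vs ! Suc m)" using Estep mN by simp
        have "{vs ! m, vs ! Suc m} \<noteq> {vs ! n, vs ! Suc n}"
        proof
          assume "{vs ! m, vs ! Suc m} = {vs ! n, vs ! Suc n}"
          moreover have "vs ! m \<noteq> vs ! n" using dist lN mN step(1) by (simp add: nth_eq_iff_index_eq)
          ultimately have "vs ! m = vs ! Suc n" "vs ! Suc m = vs ! n" by (auto simp: doubleton_eq_iff)
          then have "Suc m = n" using dist lN mN step(1) by (simp add: nth_eq_iff_index_eq)
          then show False using step(1) by simp
        qed
        then show "vs ! Suc m \<in> side (vs ! n) (vs ! Suc n)" using closure[OF a e] by blast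
      qed
    qed
    then have "vs ! N \<in> side (vs ! n) (vs ! Suc n)" using n by simp
    then show ?thesis using nxt_eq Estep n vN by simp
  qed
  have tele: "k \<le> N \<Longrightarrow> Psi (vs ! (N - k)) = (\<Sum>m\<in>{N - k..<N}. dl (vs ! m))" for k
  proof (induction k)
    case 0 then show ?case using vN Psi_j by simp
  next
    case (Suc k)
    define n where "n = N - Suc k"
    have n: "n < N" "Suc n = N - k" using Suc.prems unfolding n_def by auto
    have "Psi (vs ! n) = dl (vs ! n) + Psi (vs ! Suc n)"
      using Psi_step[OF inV neqj] n nxt_vs by simp
    also have "Psi (vs ! Suc n) = (\<Sum>m\<in>{Suc n..<N}. dl (vs ! m))" using Suc n by simp
    also have "dl (vs ! n) + (\<Sum>m\<in>{Suc n..<N}. dl (vs ! m)) = (\<Sum>m\<in>{n..<N}. dl (vs ! m))"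
      using n by (simp add: sum.atLeast_Suc_lessThan)
    finally show ?case unfolding n_def .
  qed
  have hd0: "hd vs = vs ! 0" using ne by (simp add: hd_conv_nth)
  have "Psi (hd vs) = (\<Sum>m<N. dl (vs ! m))" using tele[of N] hd0 by (simp add: atLeast0LessThan)
  also have "\<dots> = (\<Sum>m<N. 1 + 2 * real (card (comp_edges E (vs ! m) (vs ! (m + 1))))
              * (real (deg V E (vs ! m)) - 1) / real (deg V E (vs ! m)))
      - (\<Sum>m<N. if Suc m = N then 0 else 2 * (real (card (comp_edges E (vs ! m) (vs ! (m + 1)))) + 1) / real (deg V E (vs ! Suc m)))"
  proof -
    have "dl (vs ! m) = (1 + 2 * real (card (comp_edges E (vs ! m) (vs ! (m + 1))))
              * (real (deg V E (vs ! m)) - 1) / real (deg V E (vs ! m)))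
      - (if Suc m = N then 0 else 2 * (real (card (comp_edges E (vs ! m) (vs ! (m + 1)))) + 1) / real (deg V E (vs ! Suc m)))"
      if m: "m < N" for m
    proof -
      have "(vs ! Suc m = j) = (Suc m = N)" using vN lN m nth_eq_iff_index_eq[OF dist, of "Suc m" N] by auto
      then show ?thesis unfolding dl_def nxt_vs[OF m] cc_def dg_def CE_comp by simp
    qed
    then show ?thesis by (simp add: sum_subtractf)
  qed
  also have "(\<Sum>m<N. if Suc m = N then 0 else 2 * (real (card (comp_edges E (vs ! m) (vs ! (m + 1)))) + 1) / real (deg V E (vs ! Suc m)))
     = (\<Sum>n\<in>{1..<N}. 2 * real (card (comp_edges E (vs ! (n - 1)) (vs ! n))) / real (deg V E (vs ! n)))
       + (\<Sum>n\<in>{1..<N}. 2 / real (deg V E (vs ! n)))"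
  proof -
    obtain N' where N': "N = Suc N'" using N1 by (cases N) auto
    have "(\<Sum>m<N. if Suc m = N then 0 else 2 * (real (card (comp_edges E (vs ! m) (vs ! (m + 1)))) + 1) / real (deg V E (vs ! Suc m)))
       = (\<Sum>m<N'. 2 * (real (card (comp_edges E (vs ! m) (vs ! (m + 1)))) + 1) / real (deg V E (vs ! Suc m)))"
      unfolding N' by (simp add: lessThan_Suc)
    also have "\<dots> = (\<Sum>n\<in>{1..<N}. 2 * (real (card (comp_edges E (vs ! (n - 1)) (vs ! n))) + 1) / real (deg V E (vs ! n)))"
      unfolding N' One_nat_def sum.shift_bounds_Suc_ivl by (simp add: atLeast0LessThan)
    also have "\<dots> = (\<Sum>n\<in>{1..<N}. 2 * real (card (comp_edges E (vs ! (n - 1)) (vs ! n))) / real (deg V E (vs ! n))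
        + 2 / real (deg V E (vs ! n)))"
      by (intro sum.cong) (simp_all add: add_divide_distrib algebra_simps)
    finally show ?thesis by (simp add: sum.distrib)
  qed
  finally show ?thesis unfolding N_def by simp
qed

end

theorem proposition3:
  fixes V :: "'a set" and E :: "'a \<Rightarrow> 'a \<Rightarrow> bool" and i j :: 'a and vs :: "'a list"
  assumes "is_tree V E"
    and "i \<in> V" and "j \<in> V"
    and "is_path E vs" and "hd vs = i" and "last vs = j"
    and "2 \<le> length vs"
  shows "(\<lambda>n. bbrw_tail V E i j n) sums
    ((\<Sum>n\<in>{..<length vs - 1}.
        1 + 2 * real (card (comp_edges E (vs ! n) (vs ! (n + 1))))
              * (real (deg V E (vs ! n)) - 1) / real (deg V E (vs ! n)))
     - (\<Sum>n\<in>{1..<length vs - 1}.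
          2 * real (card (comp_edges E (vs ! (n - 1)) (vs ! n))) / real (deg V E (vs ! n)))
     - (\<Sum>n\<in>{1..<length vs - 1}. 2 / real (deg V E (vs ! n))))"
proof -
  interpret bb V E j using assms by unfold_locales
  have ne: "vs \<noteq> []" using assms by auto
  have "hd vs \<noteq> last vs" using assms(4,7) ne unfolding is_path_def
    by (simp add: hd_conv_nth last_conv_nth nth_eq_iff_index_eq)
  then have ij: "i \<noteq> j" using assms by simp
  show ?thesis using main_sums[OF assms(2) ij] formula[OF assms(4) assms(6) assms(7)] assms(5) by simp
qed

end
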